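(* Let $0<m\le L$ and let the two-step momentum algorithm with constant parameters $(\alpha,\beta,\gamma)$ minimize some function $f\in\mathcal{Q}_m^L$ with linear rate $\rho<1$ (i.e. the spectral radius of the matrix $A$ associated with this $f$ is at most $\rho$). Then the convergence rate $\rho$ is achieved for all functions $f\in\mathcal{Q}_m^L$.
   Context: $\mathcal{Q}_m^L$ is the class of quadratic functions $f(x)=\tfrac12x^TQx-q^Tx$ on $\mathbb{R}^n$ with $q\in\mathbb{R}^n$, $Q=Q^T\succ0$ whose largest eigenvalue is $L$ and smallest is $m$; $x^\star$ is the minimizer. The (noiseless) two-step momentum algorithm is $x^{t+2}=x^{t+1}+\beta(x^{t+1}-x^t)-\alpha\nabla f\big(x^{t+1}+\gamma(x^{t+1}-x^t)\big)$; with $\psi^t=[(x^t-x^\star)^T,(x^{t+1}-x^\star)^T]^T$, $\psi^{t+1}=A\psi^t$, $A=\begin{bmatrix}0&I\\-\beta I+\gamma\alpha Q&(1+\beta)I-(1+\gamma)\alpha Q\end{bmatrix}$. Rate $\rho$ is achieved for $f$ when the spectral radius of the corresponding $A$ is at most $\rho$. *)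

theory Defs
  imports "Jordan_Normal_Form.Spectral_Radius"
begin

definition quad_fun :: "real mat \<Rightarrow> real vec \<Rightarrow> real vec \<Rightarrow> real" where
  "quad_fun Q q x = (1/2) * scalar_prod x (Q *\<^sub>v x) - scalar_prod q x"

definition in_QmL :: "nat \<Rightarrow> real \<Rightarrow> real \<Rightarrow> real mat \<Rightarrow> real vec \<Rightarrow> bool" where
  "in_QmL n m L Q q \<longleftrightarrow>
     Q \<in> carrier_mat n n \<and> q \<in> carrier_vec n \<and>
     transpose_mat Q = Q \<and>
     (\<forall>x \<in> carrier_vec n. x \<noteq> 0\<^sub>v n \<longrightarrow> scalar_prod x (Q *\<^sub>v x) > 0) \<and>
     eigenvalue Q L \<and> eigenvalue Q m \<and>
     (\<forall>lam. eigenvalue Q lam \<longrightarrow> m \<le> lam \<and> lam \<le> L)"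

definition momentum_matrix :: "nat \<Rightarrow> real \<Rightarrow> real \<Rightarrow> real \<Rightarrow> real mat \<Rightarrow> real mat" where
  "momentum_matrix n \<alpha> \<beta> \<gamma> Q =
     four_block_mat
       (0\<^sub>m n n) (1\<^sub>m n)
       ((- \<beta>) \<cdot>\<^sub>m 1\<^sub>m n + (\<gamma> * \<alpha>) \<cdot>\<^sub>m Q)
       ((1 + \<beta>) \<cdot>\<^sub>m 1\<^sub>m n - ((1 + \<gamma>) * \<alpha>) \<cdot>\<^sub>m Q)"

definition achieves_rate :: "nat \<Rightarrow> real \<Rightarrow> real \<Rightarrow> real \<Rightarrow> real mat \<Rightarrow> real \<Rightarrow> bool" where
  "achieves_rate n \<alpha> \<beta> \<gamma> Q \<rho> \<longleftrightarrow>
     spectral_radius (map_mat complex_of_real (momentum_matrix n \<alpha> \<beta> \<gamma> Q)) \<le> \<rho>"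

end

theory Submission
  imports Defs
begin

definition good :: "real \<Rightarrow> real \<Rightarrow> real \<Rightarrow> bool" where
  "good r b c \<longleftrightarrow> c \<le> r^2 \<and> r * \<bar>b\<bar> \<le> r^2 + c \<and> \<bar>b\<bar> \<le> 2 * r"

lemma good_roots:
  assumes g: "good r b c" and r: "0 \<le> r"
    and root: "\<mu>^2 - complex_of_real b * \<mu> + complex_of_real c = 0"
  shows "cmod \<mu> \<le> r"
proof -
  obtain x y where mu: "\<mu> = Complex x y" by (cases \<mu>)
  have re: "x^2 - y^2 - b*x + c = 0" using arg_cong[OF root, of Re]
    by (simp add: mu power2_eq_square)
  have im: "2*x*y - b*y = 0" using arg_cong[OF root, of Im]
    by (simp add: mu power2_eq_square)
  have g1: "c \<le> r^2" and g2: "r * \<bar>b\<bar> \<le> r^2 + c" and g3: "\<bar>b\<bar> \<le> 2 * r"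
    using g unfolding good_def by auto
  have rb: "r * b \<le> r * \<bar>b\<bar>" "- (r * b) \<le> r * \<bar>b\<bar>" using r
    by (auto intro: mult_left_mono simp del: mult_minus_right simp add: mult_minus_right[symmetric])
  show ?thesis
  proof (cases "y = 0")
    case True
    have x0: "x^2 - b*x + c = 0" using re True by simp
    have "\<bar>x\<bar> \<le> r"
    proof (rule ccontr)
      assume "\<not> \<bar>x\<bar> \<le> r"
      hence "x > r \<or> x < -r" by auto
      thus False
      proof
        assume "x > r"
        have "(x - r) * (x + r - b) > 0" using g3 \<open>x > r\<close> r
          by (intro mult_pos_pos) auto
        hence "x^2 - b*x - r^2 + b * r > 0" by (simp add: algebra_simps power2_eq_square)
        thus False using x0 g2 rb by (simp add: algebra_simps)
      next
        assume "x < -r"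
        have "(-x - r) * (-x + r + b) > 0" using g3 \<open>x < -r\<close> r
          by (intro mult_pos_pos) auto
        hence "x^2 - b*x - r^2 - b * r > 0" by (simp add: algebra_simps power2_eq_square)
        thus False using x0 g2 rb by (simp add: algebra_simps)
      qed
    qed
    thus ?thesis using True by (simp add: mu cmod_def)
  next
    case False
    have "(2*x - b) * y = 0" using im by (simp add: algebra_simps)
    hence "b = 2*x" using False by simp
    hence "x^2 + y^2 = c" using re by (simp add: power2_eq_square algebra_simps)
    hence "(cmod \<mu>)^2 \<le> r^2" using g1 by (simp add: mu cmod_power2)
    thus ?thesis using r by (simp add: power2_le_iff_abs_le)
  qed
qed

lemma roots_good:
  assumes h: "\<And>\<mu>. \<mu>^2 - complex_of_real b * \<mu> + complex_of_real c = 0 \<Longrightarrow> cmod \<mu> \<le> r"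
  shows "good r b c \<and> 0 \<le> r"
proof (cases "b^2 - 4*c \<ge> 0")
  case True
  define s where "s = sqrt (b^2 - 4*c)"
  have s2: "s^2 = b^2 - 4*c" "s \<ge> 0" using True by (auto simp: s_def)
  define r1 where "r1 = (b + s)/2"
  define r2 where "r2 = (b - s)/2"
  have "r1^2 - b*r1 + c = 0" "r2^2 - b*r2 + c = 0" using s2
    by (auto simp: r1_def r2_def power2_eq_square field_simps)
  hence "(complex_of_real r1)^2 - complex_of_real b * complex_of_real r1 + complex_of_real c = 0"
        "(complex_of_real r2)^2 - complex_of_real b * complex_of_real r2 + complex_of_real c = 0"
    by (metis of_real_add of_real_diff of_real_eq_0_iff of_real_mult of_real_power)+
  from h[OF this(1)] h[OF this(2)] have a: "\<bar>r1\<bar> \<le> r" "\<bar>r2\<bar> \<le> r" by auto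
  have bc: "b = r1 + r2" "c = r1 * r2" using s2 by (auto simp: r1_def r2_def field_simps power2_eq_square)
  have r0: "0 \<le> r" using a by auto
  have "\<bar>r1 * r2\<bar> \<le> r * r" unfolding abs_mult using a r0 by (intro mult_mono) auto
  hence c1: "c \<le> r^2" unfolding bc power2_eq_square by linarith
  have p1: "(r - r1) * (r - r2) \<ge> 0" "(r + r1) * (r + r2) \<ge> 0" using a by auto
  have "r * \<bar>b\<bar> \<le> r^2 + c"
  proof (cases "b \<ge> 0")
    case True
    then show ?thesis using p1(1) r0 unfolding bc by (simp add: algebra_simps power2_eq_square)
  next
    case False
    then show ?thesis using p1(2) r0 unfolding bc by (simp add: algebra_simps power2_eq_square)
  qed
  moreover have "\<bar>b\<bar> \<le> 2 * r" using a unfolding bc by linarith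
  ultimately show ?thesis using c1 r0 unfolding good_def by auto
next
  case False
  define s where "s = sqrt (4*c - b^2)"
  have s2: "s^2 = 4*c - b^2" "s \<ge> 0" using False by (auto simp: s_def)
  define z where "z = Complex (b/2) (s/2)"
  have "z^2 - complex_of_real b * z + complex_of_real c = 0"
    using s2 by (simp add: z_def complex_eq_iff power2_eq_square field_simps)
  from h[OF this] have zr: "cmod z \<le> r" .
  have "4*c = b^2 + s^2" using s2 by simp
  moreover have "0 \<le> b^2 + s^2" by simp
  ultimately have c0: "0 \<le> c" by linarith
  have cz: "(cmod z)^2 = c" using s2 c0 by (simp add: z_def cmod_def power2_eq_square field_simps)
  have r0: "0 \<le> r" using zr norm_ge_zero order_trans by blast
  have c1: "c \<le> r^2" using cz zr by (metis norm_ge_zero power_mono)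
  have "sqrt c \<le> sqrt (r^2)" using c1 by (rule real_sqrt_le_mono)
  hence sc: "sqrt c \<le> r" using r0 by simp
  have "b^2 < 4 * c" using False by auto
  hence "b^2 \<le> (2 * sqrt c)^2" using c0 by (simp add: power_mult_distrib)
  moreover have "0 \<le> 2 * sqrt c" using c0 by simp
  ultimately have bb: "\<bar>b\<bar> \<le> 2 * sqrt c" using power2_le_iff_abs_le by blast
  have "r * \<bar>b\<bar> \<le> r * (2 * sqrt c)" using bb r0 by (simp add: mult_left_mono)
  also have "\<dots> \<le> r^2 + c"
  proof -
    have "0 \<le> (r - sqrt c)^2" by simp
    thus ?thesis using c0 by (simp add: power2_diff)
  qed
  finally show ?thesis using c1 bb sc r0 unfolding good_def by auto
qed
lemma smult_mat_mult_vec: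
  assumes "A \<in> carrier_mat nr nc" "v \<in> carrier_vec nc"
  shows "((k::'a::comm_ring_1) \<cdot>\<^sub>m A) *\<^sub>v v = k \<cdot>\<^sub>v (A *\<^sub>v v)"
  using assms by (intro eq_vecI) (auto simp: smult_scalar_prod_distrib[of _ nc])

lemma lin_block:
  assumes Q: "Q \<in> carrier_mat n n" and u: "u \<in> carrier_vec n"
  shows "map_mat complex_of_real (a \<cdot>\<^sub>m 1\<^sub>m n + b \<cdot>\<^sub>m Q) *\<^sub>v u
     = complex_of_real a \<cdot>\<^sub>v u + complex_of_real b \<cdot>\<^sub>v (map_mat complex_of_real Q *\<^sub>v u)"
proof -
  have "map_mat complex_of_real (a \<cdot>\<^sub>m 1\<^sub>m n + b \<cdot>\<^sub>m Q)
     = complex_of_real a \<cdot>\<^sub>m 1\<^sub>m n + complex_of_real b \<cdot>\<^sub>m map_mat complex_of_real Q"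
    using Q by (intro eq_matI) auto
  thus ?thesis using Q u
    by (simp add: add_mult_distrib_mat_vec[of _ n n] smult_mat_mult_vec[of _ n n])
qed

lemma mm_block:
  assumes Q: "Q \<in> carrier_mat n n" and u: "u \<in> carrier_vec n" and w: "w \<in> carrier_vec n"
  shows "map_mat complex_of_real (momentum_matrix n \<alpha> \<beta> \<gamma> Q) *\<^sub>v (u @\<^sub>v w)
    = w @\<^sub>v (complex_of_real (-\<beta>) \<cdot>\<^sub>v u + complex_of_real (\<gamma>*\<alpha>) \<cdot>\<^sub>v (map_mat complex_of_real Q *\<^sub>v u)
       + (complex_of_real (1+\<beta>) \<cdot>\<^sub>v w + complex_of_real (-((1+\<gamma>)*\<alpha>)) \<cdot>\<^sub>v (map_mat complex_of_real Q *\<^sub>v w)))"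
proof -
  have D: "(1 + \<beta>) \<cdot>\<^sub>m 1\<^sub>m n - ((1 + \<gamma>) * \<alpha>) \<cdot>\<^sub>m Q = (1 + \<beta>) \<cdot>\<^sub>m 1\<^sub>m n + (-((1 + \<gamma>) * \<alpha>)) \<cdot>\<^sub>m Q"
    using Q by (intro eq_matI) auto
  have C: "(- \<beta>) \<cdot>\<^sub>m 1\<^sub>m n + (\<gamma> * \<alpha>) \<cdot>\<^sub>m Q \<in> carrier_mat n n" 
    "(1 + \<beta>) \<cdot>\<^sub>m 1\<^sub>m n + (-((1 + \<gamma>) * \<alpha>)) \<cdot>\<^sub>m Q \<in> carrier_mat n n" using Q by auto
  have z: "map_mat complex_of_real (0\<^sub>m n n) = 0\<^sub>m n n"
    and o: "map_mat complex_of_real (1\<^sub>m n) = 1\<^sub>m n" by (auto intro!: eq_matI)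
  have "map_mat complex_of_real (momentum_matrix n \<alpha> \<beta> \<gamma> Q) = four_block_mat (0\<^sub>m n n) (1\<^sub>m n)
     (map_mat complex_of_real ((- \<beta>) \<cdot>\<^sub>m 1\<^sub>m n + (\<gamma> * \<alpha>) \<cdot>\<^sub>m Q))
     (map_mat complex_of_real ((1 + \<beta>) \<cdot>\<^sub>m 1\<^sub>m n + (-((1 + \<gamma>) * \<alpha>)) \<cdot>\<^sub>m Q))"
    unfolding momentum_matrix_def D using C
    by (subst map_four_block_mat[of _ n n _ n _ n]) (auto simp: z o)
  also have "\<dots> *\<^sub>v (u @\<^sub>v w) = (0\<^sub>m n n *\<^sub>v u + 1\<^sub>m n *\<^sub>v w) @\<^sub>v
      (map_mat complex_of_real ((- \<beta>) \<cdot>\<^sub>m 1\<^sub>m n + (\<gamma> * \<alpha>) \<cdot>\<^sub>m Q) *\<^sub>v u +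
       map_mat complex_of_real ((1 + \<beta>) \<cdot>\<^sub>m 1\<^sub>m n + (-((1 + \<gamma>) * \<alpha>)) \<cdot>\<^sub>m Q) *\<^sub>v w)"
    using C u w by (intro four_block_mat_mult_vec) auto
  also have "0\<^sub>m n n *\<^sub>v u + 1\<^sub>m n *\<^sub>v w = w" using u w by auto
  finally show ?thesis using lin_block[OF Q u] lin_block[OF Q w] by simp
qed
lemma sym_scalar:
  assumes Q: "Q \<in> carrier_mat n n" and T: "transpose_mat Q = Q"
    and x: "x \<in> carrier_vec n" and y: "y \<in> carrier_vec n"
  shows "x \<bullet> (Q *\<^sub>v y) = y \<bullet> ((Q::real mat) *\<^sub>v x)"
proof -
  have "x \<bullet> (Q *\<^sub>v y) = (transpose_mat Q *\<^sub>v x) \<bullet> y"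
    using transpose_vec_mult_scalar[OF Q y x] by simp
  also have "\<dots> = y \<bullet> (Q *\<^sub>v x)" unfolding T using Q x y by (intro comm_scalar_prod[of _ n]) auto
  finally show ?thesis .
qed

lemma complex_eig_real:
  assumes QmL: "in_QmL n m L Q q" and u: "u \<in> carrier_vec n" and u0: "u \<noteq> 0\<^sub>v n"
    and ev: "map_mat complex_of_real Q *\<^sub>v u = \<kappa> \<cdot>\<^sub>v u"
  shows "\<exists>k. \<kappa> = complex_of_real k \<and> m \<le> k \<and> k \<le> L"
proof -
  have Q: "Q \<in> carrier_mat n n" and T: "transpose_mat Q = Q"
    and EV: "\<And>lam. eigenvalue Q lam \<Longrightarrow> m \<le> lam \<and> lam \<le> L"
    using QmL unfolding in_QmL_def by auto
  define x where "x = vec n (\<lambda>i. Re (u $ i))"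
  define y where "y = vec n (\<lambda>i. Im (u $ i))"
  define a where "a = Re \<kappa>"
  define b where "b = Im \<kappa>"
  have x: "x \<in> carrier_vec n" and y: "y \<in> carrier_vec n" unfolding x_def y_def by auto
  have du: "dim_vec u = n" using u by auto
  have comp: "(map_mat complex_of_real Q *\<^sub>v u) $ i = (\<Sum>j<n. complex_of_real (Q $$ (i,j)) * u $ j)"
    if "i < n" for i
    using that Q u by (auto simp: scalar_prod_def row_def lessThan_atLeast0)
  have Qx: "Q *\<^sub>v x = a \<cdot>\<^sub>v x - b \<cdot>\<^sub>v y"
  proof (rule eq_vecI)
    fix i assume "i < dim_vec (a \<cdot>\<^sub>v x - b \<cdot>\<^sub>v y)"
    hence i: "i < n" using x y by auto
    have "(Q *\<^sub>v x) $ i = (\<Sum>j<n. Q $$ (i,j) * Re (u $ j))"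
      using i Q by (auto simp: scalar_prod_def row_def x_def lessThan_atLeast0)
    also have "\<dots> = Re ((map_mat complex_of_real Q *\<^sub>v u) $ i)"
      unfolding comp[OF i] by (simp add: Re_sum)
    also have "\<dots> = a * Re (u $ i) - b * Im (u $ i)" using ev i du by (simp add: a_def b_def)
    finally show "(Q *\<^sub>v x) $ i = (a \<cdot>\<^sub>v x - b \<cdot>\<^sub>v y) $ i" using i by (simp add: x_def y_def)
  qed (use Q x y in auto)
  have Qy: "Q *\<^sub>v y = b \<cdot>\<^sub>v x + a \<cdot>\<^sub>v y"
  proof (rule eq_vecI)
    fix i assume "i < dim_vec (b \<cdot>\<^sub>v x + a \<cdot>\<^sub>v y)"
    hence i: "i < n" using x y by auto
    have "(Q *\<^sub>v y) $ i = (\<Sum>j<n. Q $$ (i,j) * Im (u $ j))"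
      using i Q by (auto simp: scalar_prod_def row_def y_def lessThan_atLeast0)
    also have "\<dots> = Im ((map_mat complex_of_real Q *\<^sub>v u) $ i)"
      unfolding comp[OF i] by (simp add: Im_sum)
    also have "\<dots> = b * Re (u $ i) + a * Im (u $ i)" using ev i du by (simp add: a_def b_def)
    finally show "(Q *\<^sub>v y) $ i = (b \<cdot>\<^sub>v x + a \<cdot>\<^sub>v y) $ i" using i by (simp add: x_def y_def)
  qed (use Q x y in auto)
  have "x \<bullet> (Q *\<^sub>v y) = y \<bullet> (Q *\<^sub>v x)" by (rule sym_scalar[OF Q T x y])
  hence "b * (x \<bullet> x) + a * (x \<bullet> y) = a * (y \<bullet> x) - b * (y \<bullet> y)"
    unfolding Qx Qy using x y
    by (simp add: scalar_prod_add_distrib[of _ n] scalar_prod_minus_distrib[of _ n])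
  moreover have "x \<bullet> y = y \<bullet> x" using x y by (rule comm_scalar_prod)
  ultimately have b0: "b * (x \<bullet> x + y \<bullet> y) = 0" by (simp add: algebra_simps)
  obtain j where j: "j < n" "u $ j \<noteq> 0" using u0 u by (metis index_zero_vec(1) eq_vecI carrier_vecD index_zero_vec(2))
  have xy: "x \<bullet> x + y \<bullet> y = (\<Sum>i\<in>{0..<n}. (Re (u $ i))^2 + (Im (u $ i))^2)"
    unfolding x_def y_def scalar_prod_def by (simp add: sum.distrib power2_eq_square)
  have "(Re (u $ j))^2 + (Im (u $ j))^2 > 0" using j(2)
    by (metis cmod_power2 zero_less_norm_iff zero_less_power)
  also have "\<dots> \<le> x \<bullet> x + y \<bullet> y" unfolding xy
    by (rule member_le_sum) (use j in auto)
  finally have b: "b = 0" using b0 by simp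
  have "x \<noteq> 0\<^sub>v n \<or> y \<noteq> 0\<^sub>v n"
  proof (rule ccontr)
    assume "\<not> ?thesis"
    hence "x $ j = 0" "y $ j = 0" using j by auto
    thus False using j by (simp add: x_def y_def complex_eq_iff)
  qed
  have e1: "a \<cdot>\<^sub>v x - 0 \<cdot>\<^sub>v y = a \<cdot>\<^sub>v x" and e2: "0 \<cdot>\<^sub>v x + a \<cdot>\<^sub>v y = a \<cdot>\<^sub>v y"
    by (intro eq_vecI; use x y in auto)+
  from \<open>x \<noteq> 0\<^sub>v n \<or> y \<noteq> 0\<^sub>v n\<close> have "eigenvalue Q a"
  proof
    assume "x \<noteq> 0\<^sub>v n"
    hence "eigenvector Q x a" unfolding eigenvector_def using Q x Qx b e1 by auto
    thus ?thesis unfolding eigenvalue_def by auto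
  next
    assume "y \<noteq> 0\<^sub>v n"
    hence "eigenvector Q y a" unfolding eigenvector_def using Q y Qy b e2 by auto
    thus ?thesis unfolding eigenvalue_def by auto
  qed
  from EV[OF this] have "m \<le> a \<and> a \<le> L" .
  moreover have "\<kappa> = complex_of_real a" using b by (simp add: a_def b_def complex_eq_iff)
  ultimately show ?thesis by auto
qed

definition proot :: "real \<Rightarrow> real \<Rightarrow> real \<Rightarrow> real \<Rightarrow> complex \<Rightarrow> bool" where
  "proot \<alpha> \<beta> \<gamma> \<kappa> \<mu> \<longleftrightarrow>
     \<mu>^2 - complex_of_real (1 + \<beta> - (1 + \<gamma>) * \<alpha> * \<kappa>) * \<mu> + complex_of_real (\<beta> - \<gamma> * \<alpha> * \<kappa>) = 0"

lemma mm_carrier: "Q \<in> carrier_mat n n \<Longrightarrow>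
  map_mat complex_of_real (momentum_matrix n \<alpha> \<beta> \<gamma> Q) \<in> carrier_mat (n+n) (n+n)"
proof -
  assume Q: "Q \<in> carrier_mat n n"
  have "momentum_matrix n \<alpha> \<beta> \<gamma> Q \<in> carrier_mat (n+n) (n+n)"
    unfolding momentum_matrix_def by (intro four_block_carrier_mat) (use Q in auto)
  thus ?thesis by simp
qed

lemma upper:
  assumes QmL: "in_QmL n m L Q q"
    and H: "\<And>\<kappa> \<mu>. m \<le> \<kappa> \<Longrightarrow> \<kappa> \<le> L \<Longrightarrow> proot \<alpha> \<beta> \<gamma> \<kappa> \<mu> \<Longrightarrow> cmod \<mu> \<le> \<rho>"
  shows "achieves_rate n \<alpha> \<beta> \<gamma> Q \<rho>"
proof -
  have Q: "Q \<in> carrier_mat n n" and ml: "m \<le> L" and eL: "eigenvalue Q L"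
    using QmL unfolding in_QmL_def by auto
  have n0: "n > 0"
  proof (rule ccontr)
    assume "\<not> n > 0"
    hence "n = 0" by auto
    moreover obtain v where "eigenvector Q v L" using eL unfolding eigenvalue_def by auto
    ultimately show False using Q unfolding eigenvector_def by (auto intro!: eq_vecI)
  qed
  define AC where "AC = map_mat complex_of_real (momentum_matrix n \<alpha> \<beta> \<gamma> Q)"
  define QC where "QC = map_mat complex_of_real Q"
  have AC: "AC \<in> carrier_mat (n+n) (n+n)" unfolding AC_def using mm_carrier[OF Q] .
  have QC: "QC \<in> carrier_mat n n" unfolding QC_def using Q by auto
  from spectral_radius_mem_max(1)[OF AC] n0
  obtain \<mu> where sr: "spectral_radius AC = cmod \<mu>" and "\<mu> \<in> spectrum AC" by auto
  then obtain v where ev: "eigenvector AC v \<mu>" unfolding spectrum_def eigenvalue_def by auto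
  hence v: "v \<in> carrier_vec (n+n)" and v0: "v \<noteq> 0\<^sub>v (n+n)" and Av: "AC *\<^sub>v v = \<mu> \<cdot>\<^sub>v v"
    using AC unfolding eigenvector_def by auto
  define u where "u = vec_first v n"
  define w where "w = vec_last v n"
  have u: "u \<in> carrier_vec n" and w: "w \<in> carrier_vec n" unfolding u_def w_def by auto
  have vuw: "v = u @\<^sub>v w" unfolding u_def w_def using v by simp
  define R where "R = complex_of_real (-\<beta>) \<cdot>\<^sub>v u + complex_of_real (\<gamma>*\<alpha>) \<cdot>\<^sub>v (QC *\<^sub>v u)
       + (complex_of_real (1+\<beta>) \<cdot>\<^sub>v w + complex_of_real (-((1+\<gamma>)*\<alpha>)) \<cdot>\<^sub>v (QC *\<^sub>v w))"
  have R: "R \<in> carrier_vec n" unfolding R_def using u w QC by auto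
  have blk: "AC *\<^sub>v v = w @\<^sub>v R" unfolding AC_def R_def QC_def vuw by (rule mm_block[OF Q u w])
  have hw: "w $ i = \<mu> * u $ i" if i: "i < n" for i
  proof -
    have "(AC *\<^sub>v v) $ i = (\<mu> \<cdot>\<^sub>v v) $ i" using Av by simp
    thus ?thesis unfolding blk using i u w R v vuw by auto
  qed
  have hR: "R $ i = \<mu> * w $ i" if i: "i < n" for i
  proof -
    have "(AC *\<^sub>v v) $ (n+i) = (\<mu> \<cdot>\<^sub>v v) $ (n+i)" using Av by simp
    thus ?thesis unfolding blk using i u w R v vuw by auto
  qed
  have wmu: "w = \<mu> \<cdot>\<^sub>v u" using hw u w by (intro eq_vecI) auto
  have QCw: "QC *\<^sub>v w = \<mu> \<cdot>\<^sub>v (QC *\<^sub>v u)" unfolding wmu using QC u by (rule mult_mat_vec)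
  define s where "s = complex_of_real (\<gamma>*\<alpha>) - complex_of_real ((1+\<gamma>)*\<alpha>) * \<mu>"
  define t where "t = \<mu>^2 - complex_of_real (1+\<beta>) * \<mu> + complex_of_real \<beta>"
  have key: "s * (QC *\<^sub>v u) $ i = t * u $ i" if i: "i < n" for i
  proof -
    have "R $ i = \<mu> * (\<mu> * u $ i)" using hR[OF i] hw[OF i] by simp
    moreover have "R $ i = complex_of_real (-\<beta>) * u $ i + complex_of_real (\<gamma>*\<alpha>) * (QC *\<^sub>v u) $ i
       + (complex_of_real (1+\<beta>) * (\<mu> * u $ i) + complex_of_real (-((1+\<gamma>)*\<alpha>)) * (\<mu> * (QC *\<^sub>v u) $ i))"
      unfolding R_def QCw using i u w QC hw[OF i] by simp
    ultimately show ?thesis unfolding s_def t_def by (simp add: algebra_simps power2_eq_square)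
  qed
  have u0: "u \<noteq> 0\<^sub>v n"
  proof
    assume "u = 0\<^sub>v n"
    hence "w = 0\<^sub>v n" using wmu by auto
    with \<open>u = 0\<^sub>v n\<close> have "v = 0\<^sub>v (n+n)" unfolding vuw by (intro eq_vecI) auto
    thus False using v0 by simp
  qed
  then obtain j where j: "j < n" "u $ j \<noteq> 0" using u by (metis index_zero_vec(1) eq_vecI carrier_vecD index_zero_vec(2))
  have pr: "proot \<alpha> \<beta> \<gamma> k \<mu> \<longleftrightarrow> t - complex_of_real k * s = 0" for k
    unfolding proot_def s_def t_def by (simp add: algebra_simps)
  have "\<exists>k. m \<le> k \<and> k \<le> L \<and> proot \<alpha> \<beta> \<gamma> k \<mu>"
  proof (cases "s = 0")
    case True
    hence "t * u $ j = 0" using key[OF j(1)] by simp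
    hence "t = 0" using j by simp
    thus ?thesis using True pr[of m] ml by auto
  next
    case False
    have "QC *\<^sub>v u = (t / s) \<cdot>\<^sub>v u" using key False QC u
      by (intro eq_vecI) (auto simp: field_simps)
    from complex_eig_real[OF QmL u u0 this[unfolded QC_def]]
    obtain k where "t / s = complex_of_real k" "m \<le> k" "k \<le> L" by auto
    thus ?thesis using False pr[of k] by (auto simp: field_simps)
  qed
  then obtain k where "m \<le> k" "k \<le> L" "proot \<alpha> \<beta> \<gamma> k \<mu>" by auto
  from H[OF this] show ?thesis unfolding achieves_rate_def AC_def[symmetric] sr .
qed

lemma lower:
  assumes QmL: "in_QmL n m L Q q" and ar: "achieves_rate n \<alpha> \<beta> \<gamma> Q \<rho>"
    and el: "eigenvalue Q lam" and pr: "proot \<alpha> \<beta> \<gamma> lam \<mu>"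
  shows "cmod \<mu> \<le> \<rho>"
proof -
  have Q: "Q \<in> carrier_mat n n" using QmL unfolding in_QmL_def by auto
  obtain w0 where "eigenvector Q w0 lam" using el unfolding eigenvalue_def by auto
  hence w0: "w0 \<in> carrier_vec n" and w00: "w0 \<noteq> 0\<^sub>v n" and Qw: "Q *\<^sub>v w0 = lam \<cdot>\<^sub>v w0"
    using Q unfolding eigenvector_def by auto
  define AC where "AC = map_mat complex_of_real (momentum_matrix n \<alpha> \<beta> \<gamma> Q)"
  define QC where "QC = map_mat complex_of_real Q"
  define wc where "wc = map_vec complex_of_real w0"
  have AC: "AC \<in> carrier_mat (n+n) (n+n)" unfolding AC_def using mm_carrier[OF Q] .
  have QC: "QC \<in> carrier_mat n n" unfolding QC_def using Q by auto
  have wc: "wc \<in> carrier_vec n" unfolding wc_def using w0 by auto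
  have "QC *\<^sub>v wc = map_vec complex_of_real (Q *\<^sub>v w0)"
    unfolding QC_def wc_def by (rule of_real_hom.mult_mat_vec_hom[symmetric]) (use Q w0 in auto)
  also have "\<dots> = complex_of_real lam \<cdot>\<^sub>v wc" unfolding Qw wc_def using w0
    by (intro eq_vecI) auto
  finally have QCw: "QC *\<^sub>v wc = complex_of_real lam \<cdot>\<^sub>v wc" .
  have QCw2: "QC *\<^sub>v (\<mu> \<cdot>\<^sub>v wc) = \<mu> \<cdot>\<^sub>v (complex_of_real lam \<cdot>\<^sub>v wc)"
    using mult_mat_vec[OF QC wc] QCw by simp
  define v where "v = wc @\<^sub>v (\<mu> \<cdot>\<^sub>v wc)"
  have v: "v \<in> carrier_vec (n+n)" unfolding v_def using wc by auto
  have pr': "\<mu>^2 = complex_of_real (1 + \<beta> - (1 + \<gamma>) * \<alpha> * lam) * \<mu> - complex_of_real (\<beta> - \<gamma> * \<alpha> * lam)"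
    using pr unfolding proot_def by (simp add: algebra_simps)
  have "AC *\<^sub>v v = \<mu> \<cdot>\<^sub>v v"
    unfolding AC_def v_def mm_block[OF Q wc smult_carrier_vec[THEN iffD2, OF wc]] QC_def[symmetric] QCw QCw2
  proof (rule eq_vecI)
    fix i assume "i < dim_vec (\<mu> \<cdot>\<^sub>v (wc @\<^sub>v \<mu> \<cdot>\<^sub>v wc))"
    hence i: "i < n + n" using wc by simp
    show "(\<mu> \<cdot>\<^sub>v wc @\<^sub>v
          (complex_of_real (- \<beta>) \<cdot>\<^sub>v wc + complex_of_real (\<gamma> * \<alpha>) \<cdot>\<^sub>v (complex_of_real lam \<cdot>\<^sub>v wc) +
           (complex_of_real (1 + \<beta>) \<cdot>\<^sub>v (\<mu> \<cdot>\<^sub>v wc) +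
            complex_of_real (- ((1 + \<gamma>) * \<alpha>)) \<cdot>\<^sub>v (\<mu> \<cdot>\<^sub>v (complex_of_real lam \<cdot>\<^sub>v wc))))) $ i =
          (\<mu> \<cdot>\<^sub>v (wc @\<^sub>v \<mu> \<cdot>\<^sub>v wc)) $ i"
    proof (cases "i < n")
      case True
      thus ?thesis using wc by simp
    next
      case False
      then obtain j where j: "i = n + j" "j < n" using i by (metis add_diff_inverse_nat add_less_imp_less_left)
      have "\<mu> * (\<mu> * wc $ j) = \<mu>^2 * wc $ j" by (simp add: power2_eq_square)
      thus ?thesis using wc j unfolding pr' by (simp add: algebra_simps)
    qed
  qed (use wc in simp)
  moreover have "v \<noteq> 0\<^sub>v (n+n)"
  proof
    assume "v = 0\<^sub>v (n+n)"
    have "w0 $ i = 0" if i: "i < n" for i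
    proof -
      have "v $ i = 0\<^sub>v (n+n) $ i" using \<open>v = 0\<^sub>v (n+n)\<close> by simp
      thus ?thesis using i wc w0 by (simp add: v_def wc_def)
    qed
    hence "w0 = 0\<^sub>v n" using w0 by (intro eq_vecI) auto
    thus False using w00 by simp
  qed
  ultimately have "eigenvector AC v \<mu>" unfolding eigenvector_def using v AC by auto
  hence "\<mu> \<in> spectrum AC" unfolding spectrum_def eigenvalue_def by auto
  moreover have "n + n > 0" using w0 w00 by (cases n) (auto intro!: eq_vecI)
  ultimately have "cmod \<mu> \<le> spectral_radius AC" using spectral_radius_mem_max(2)[OF AC] by auto
  thus ?thesis using ar unfolding achieves_rate_def AC_def by simp
qed

lemma good_convex:
  assumes "good r b1 c1" "good r b2 c2" "0 \<le> t" "t \<le> 1" "0 \<le> r"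
  shows "good r ((1-t)*b1 + t*b2) ((1-t)*c1 + t*c2)"
proof -
  have ab: "\<bar>(1-t)*b1 + t*b2\<bar> \<le> (1-t)*\<bar>b1\<bar> + t*\<bar>b2\<bar>"
    using assms(3,4) by (metis abs_mult abs_of_nonneg abs_triangle_ineq diff_ge_0_iff_ge)
  have g: "c1 \<le> r^2" "r*\<bar>b1\<bar> \<le> r^2 + c1" "\<bar>b1\<bar> \<le> 2*r" "c2 \<le> r^2" "r*\<bar>b2\<bar> \<le> r^2 + c2" "\<bar>b2\<bar> \<le> 2*r"
    using assms(1,2) unfolding good_def by auto
  have t1: "0 \<le> 1 - t" using assms by simp
  have "(1-t)*c1 + t*c2 \<le> (1-t)*r^2 + t*r^2"
    using mult_left_mono[OF g(1) t1] mult_left_mono[OF g(4) assms(3)] by linarith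
  moreover have "r * \<bar>(1-t)*b1 + t*b2\<bar> \<le> (1-t)*(r*\<bar>b1\<bar>) + t*(r*\<bar>b2\<bar>)"
    using mult_left_mono[OF ab assms(5)] by (simp add: algebra_simps)
  moreover have "(1-t)*(r*\<bar>b1\<bar>) + t*(r*\<bar>b2\<bar>) \<le> (1-t)*(r^2+c1) + t*(r^2+c2)"
    using mult_left_mono[OF g(2) t1] mult_left_mono[OF g(5) assms(3)] by linarith
  moreover have "(1-t)*\<bar>b1\<bar> + t*\<bar>b2\<bar> \<le> (1-t)*(2*r) + t*(2*r)"
    using mult_left_mono[OF g(3) t1] mult_left_mono[OF g(6) assms(3)] by linarith
  ultimately show ?thesis using ab unfolding good_def by (simp add: algebra_simps)
qed

theorem corollary1:
  fixes n :: nat and m L \<alpha> \<beta> \<gamma> \<rho> :: real and Q0 :: "real mat" and q0 :: "real vec"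
  assumes "0 < m" and "m \<le> L"
    and "in_QmL n m L Q0 q0"
    and "achieves_rate n \<alpha> \<beta> \<gamma> Q0 \<rho>"
    and "\<rho> < 1"
  shows "\<forall>Q q. in_QmL n m L Q q \<longrightarrow> achieves_rate n \<alpha> \<beta> \<gamma> Q \<rho>"
proof (intro allI impI)
  fix Q q assume QmL: "in_QmL n m L Q q"
  define b where "b = (\<lambda>k. 1 + \<beta> - (1 + \<gamma>) * \<alpha> * k)"
  define c where "c = (\<lambda>k. \<beta> - \<gamma> * \<alpha> * k)"
  have pb: "proot \<alpha> \<beta> \<gamma> k \<mu> \<longleftrightarrow> \<mu>^2 - complex_of_real (b k) * \<mu> + complex_of_real (c k) = 0" for k \<mu>
    unfolding proot_def b_def c_def ..
  have em: "eigenvalue Q0 m" and eL: "eigenvalue Q0 L" using assms(3) unfolding in_QmL_def by auto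
  have gm: "good \<rho> (b m) (c m) \<and> 0 \<le> \<rho>"
    by (rule roots_good) (rule lower[OF assms(3,4) em], simp add: pb)
  have gL: "good \<rho> (b L) (c L)"
    using roots_good[of "b L" "c L" \<rho>] lower[OF assms(3,4) eL] by (simp add: pb)
  show "achieves_rate n \<alpha> \<beta> \<gamma> Q \<rho>"
  proof (rule upper[OF QmL])
    fix \<kappa> \<mu> assume k: "m \<le> \<kappa>" "\<kappa> \<le> L" and p: "proot \<alpha> \<beta> \<gamma> \<kappa> \<mu>"
    have "good \<rho> (b \<kappa>) (c \<kappa>)"
    proof (cases "m = L")
      case True
      hence "\<kappa> = m" using k by simp
      thus ?thesis using gm by simp
    next
      case False
      hence mL: "m < L" using assms(2) by simp
      define t where "t = (\<kappa> - m) / (L - m)"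
      have t: "0 \<le> t" "t \<le> 1" unfolding t_def using k mL by auto
      have "t * (L - m) = \<kappa> - m" unfolding t_def using mL by simp
      hence "t * L - t * m = \<kappa> - m" by (simp add: algebra_simps)
      hence kt: "\<kappa> = (1-t) * m + t * L" by (simp add: algebra_simps)
      have "b \<kappa> = (1-t) * b m + t * b L" "c \<kappa> = (1-t) * c m + t * c L"
        unfolding b_def c_def kt by (simp_all add: algebra_simps)
      thus ?thesis using good_convex[of \<rho> "b m" "c m" "b L" "c L" t] gm gL t by simp
    qed
    thus "cmod \<mu> \<le> \<rho>" using good_roots gm p by (simp add: pb)
  qed
qed

end
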